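(* Let $\Omega\subset\mathbb{C}$ be a simply connected open set with conformal coordinate $z=x+iy$, let $N:\Omega\to\mathbb{S}^2\subset\mathbb{R}^3$ be a smooth harmonic map, and let $f:\Omega\to\mathbb{R}^3$ be a spherical frontal associated to $N$, i.e. a smooth map with $f_x=N\times N_y$ and $f_y=-N\times N_x$. Let $p\in\Omega$. Then $f$ is a wave front near $p$ if and only if $\operatorname{rank}(dN)_p\neq 0$.
   Context: A smooth map $N:\Omega\to\mathbb{S}^2$ is harmonic iff $N\times(N_{xx}+N_{yy})=0$; this is the integrability condition for $f_x=N\times N_y,\ f_y=-N\times N_x$, so such $f$ exists and is unique up to translation. A map $h:M\to\mathbb{R}^3$ from a surface is a frontal if there is a smooth $\mathcal{N}:M\to\mathbb{S}^2$ with $dh$ orthogonal to $\mathcal{N}$; it is a wave front (front) if the Legendrian lift $(h,\mathcal{N}):M\to\mathbb{R}^3\times\mathbb{S}^2$ is an immersion. For the spherical frontal $f$ the relevant lift is $(f,N)$. *)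

theory Defs
  imports "HOL-Analysis.Analysis"
begin

definition pdx :: "(complex \<Rightarrow> 'a::real_normed_vector) \<Rightarrow> complex \<Rightarrow> 'a" where
  "pdx F z = frechet_derivative F (at z) 1"

definition pdy :: "(complex \<Rightarrow> 'a::real_normed_vector) \<Rightarrow> complex \<Rightarrow> 'a" where
  "pdy F z = frechet_derivative F (at z) \<i>"

fun Ck_on :: "nat \<Rightarrow> complex set \<Rightarrow> (complex \<Rightarrow> 'a::real_normed_vector) \<Rightarrow> bool" where
  "Ck_on 0 S F = continuous_on S F"
| "Ck_on (Suc k) S F = (F differentiable_on S \<and> continuous_on S F
      \<and> Ck_on k S (pdx F) \<and> Ck_on k S (pdy F))"

definition smooth_on :: "complex set \<Rightarrow> (complex \<Rightarrow> 'a::real_normed_vector) \<Rightarrow> bool" where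
  "smooth_on S F = (\<forall>k. Ck_on k S F)"

definition harmonic_sphere_map :: "complex set \<Rightarrow> (complex \<Rightarrow> real^3) \<Rightarrow> bool" where
  "harmonic_sphere_map \<Omega> N =
     (smooth_on \<Omega> N \<and> (\<forall>z\<in>\<Omega>. norm (N z) = 1)
      \<and> (\<forall>z\<in>\<Omega>. cross3 (N z) (pdx (pdx N) z + pdy (pdy N) z) = 0))"

definition spherical_frontal :: "complex set \<Rightarrow> (complex \<Rightarrow> real^3) \<Rightarrow> (complex \<Rightarrow> real^3) \<Rightarrow> bool" where
  "spherical_frontal \<Omega> N f =
     (smooth_on \<Omega> f \<and> (\<forall>z\<in>\<Omega>. pdx f z = cross3 (N z) (pdy N z)
                                \<and> pdy f z = - cross3 (N z) (pdx N z)))"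

definition frontal_on :: "complex set \<Rightarrow> (complex \<Rightarrow> real^3) \<Rightarrow> (complex \<Rightarrow> real^3) \<Rightarrow> bool" where
  "frontal_on U h N =
     (\<forall>q\<in>U. norm (N q) = 1 \<and> (\<forall>v. frechet_derivative h (at q) v \<bullet> N q = 0))"

definition wave_front_on :: "complex set \<Rightarrow> (complex \<Rightarrow> real^3) \<Rightarrow> (complex \<Rightarrow> real^3) \<Rightarrow> bool" where
  "wave_front_on U h N =
     (frontal_on U h N \<and>
      (\<forall>q\<in>U. (\<lambda>z. (h z, N z)) differentiable (at q)
             \<and> inj (frechet_derivative (\<lambda>z. (h z, N z)) (at q))))"

definition wave_front_near :: "complex set \<Rightarrow> (complex \<Rightarrow> real^3) \<Rightarrow> (complex \<Rightarrow> real^3) \<Rightarrow> complex \<Rightarrow> bool" where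
  "wave_front_near \<Omega> h N p = (\<exists>U. open U \<and> p \<in> U \<and> U \<subseteq> \<Omega> \<and> wave_front_on U h N)"

end

theory Submission
  imports Defs
begin

lemma fd_decomp:
  assumes "F differentiable (at z)"
  shows "frechet_derivative F (at z) v = Re v *\<^sub>R pdx F z + Im v *\<^sub>R pdy F z"
proof -
  have lin: "linear (frechet_derivative F (at z))"
    using assms frechet_derivative_works has_derivative_linear by blast
  have "v = Re v *\<^sub>R 1 + Im v *\<^sub>R \<i>" by (simp add: complex_eq_iff)
  then have "frechet_derivative F (at z) v = frechet_derivative F (at z) (Re v *\<^sub>R 1 + Im v *\<^sub>R \<i>)"
    by simp
  also have "\<dots> = Re v *\<^sub>R pdx F z + Im v *\<^sub>R pdy F z"
    using lin unfolding pdx_def pdy_def by (simp add: linear_add linear_scale)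
  finally show ?thesis .
qed

lemma perp:
  assumes "open \<Omega>" "q \<in> \<Omega>" "\<forall>z\<in>\<Omega>. norm (N z) = (1::real)" "(N::complex \<Rightarrow> real^3) differentiable (at q)"
  shows "N q \<bullet> frechet_derivative N (at q) v = 0"
proof -
  let ?N' = "frechet_derivative N (at q)"
  have d: "(N has_derivative ?N') (at q)" using assms(4) frechet_derivative_works by blast
  have d1: "((\<lambda>z. N z \<bullet> N z) has_derivative (\<lambda>v. N q \<bullet> ?N' v + ?N' v \<bullet> N q)) (at q)"
    using has_derivative_inner[OF d d] by simp
  have d2: "((\<lambda>z. N z \<bullet> N z) has_derivative (\<lambda>v. 0)) (at q)"
  proof (rule has_derivative_transform_within_open[OF _ assms(1) assms(2)])
    show "((\<lambda>z. 1::real) has_derivative (\<lambda>v. 0)) (at q)" by simp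
    show "\<And>x. x \<in> \<Omega> \<Longrightarrow> 1 = N x \<bullet> N x" using assms(3) norm_eq_1 by metis
  qed
  have "(\<lambda>v. N q \<bullet> ?N' v + ?N' v \<bullet> N q) = (\<lambda>v. 0)" using has_derivative_unique[OF d1 d2] .
  then have "N q \<bullet> ?N' v + ?N' v \<bullet> N q = 0" by meson
  then show ?thesis by (simp add: inner_commute)
qed

lemma cross_perp_zero:
  fixes n y :: "real^3"
  assumes "norm n = 1" "n \<bullet> y = 0" "cross3 n y = 0"
  shows "y = 0"
  using norm_cross_dot[of n y] assms by simp

theorem proposition2p1:
  fixes \<Omega> :: "complex set" and N f :: "complex \<Rightarrow> real^3" and p :: complex
  assumes "open \<Omega>" and "simply_connected \<Omega>"
    and "harmonic_sphere_map \<Omega> N"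
    and "spherical_frontal \<Omega> N f"
    and "p \<in> \<Omega>"
  shows "wave_front_near \<Omega> f N p \<longleftrightarrow> dim (range (frechet_derivative N (at p))) \<noteq> 0"
proof -
  have sN: "smooth_on \<Omega> N" and n1: "\<forall>z\<in>\<Omega>. norm (N z) = 1"
    using assms(3) unfolding harmonic_sphere_map_def by auto
  have sf: "smooth_on \<Omega> f" and fx: "\<And>z. z\<in>\<Omega> \<Longrightarrow> pdx f z = cross3 (N z) (pdy N z)"
    and fy: "\<And>z. z\<in>\<Omega> \<Longrightarrow> pdy f z = - cross3 (N z) (pdx N z)"
    using assms(4) unfolding spherical_frontal_def by auto
  have c2: "Ck_on (Suc (Suc 0)) \<Omega> N" "Ck_on (Suc 0) \<Omega> f"
    using sN sf unfolding smooth_on_def by blast+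
  have dN: "\<And>q. q \<in> \<Omega> \<Longrightarrow> N differentiable (at q)"
    using c2(1) assms(1) differentiable_on_eq_differentiable_at by auto
  have df: "\<And>q. q \<in> \<Omega> \<Longrightarrow> f differentiable (at q)"
    using c2(2) assms(1) differentiable_on_eq_differentiable_at by auto
  have cx: "continuous_on \<Omega> (pdx N)" and cy: "continuous_on \<Omega> (pdy N)" using c2(1) by auto
  have perpx: "\<And>q. q \<in> \<Omega> \<Longrightarrow> N q \<bullet> pdx N q = 0"
    unfolding pdx_def using perp[OF assms(1) _ n1 dN] by blast
  have perpy: "\<And>q. q \<in> \<Omega> \<Longrightarrow> N q \<bullet> pdy N q = 0"
    unfolding pdy_def using perp[OF assms(1) _ n1 dN] by blast
  have pairD: "\<And>q. q \<in> \<Omega> \<Longrightarrow> ((\<lambda>z. (f z, N z)) has_derivative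
      (\<lambda>v. (frechet_derivative f (at q) v, frechet_derivative N (at q) v))) (at q)"
    using dN df frechet_derivative_works has_derivative_Pair by blast
  have pairF: "frechet_derivative (\<lambda>z. (f z, N z)) (at q) =
      (\<lambda>v. (frechet_derivative f (at q) v, frechet_derivative N (at q) v))" if "q \<in> \<Omega>" for q
    using frechet_derivative_at[OF pairD[OF that]] by simp
  have rangeiff: "dim (range (frechet_derivative N (at q))) \<noteq> 0 \<longleftrightarrow> (pdx N q \<noteq> 0 \<or> pdy N q \<noteq> 0)"
    if "q \<in> \<Omega>" for q
  proof -
    have L: "\<And>v. frechet_derivative N (at q) v = Re v *\<^sub>R pdx N q + Im v *\<^sub>R pdy N q"
      using fd_decomp[OF dN[OF that]] .
    have "dim (range (frechet_derivative N (at q))) \<noteq> 0 \<longleftrightarrow> (\<exists>v. frechet_derivative N (at q) v \<noteq> 0)"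
      by (auto simp: image_subset_iff)
    also have "\<dots> \<longleftrightarrow> (pdx N q \<noteq> 0 \<or> pdy N q \<noteq> 0)"
    proof
      assume "\<exists>v. frechet_derivative N (at q) v \<noteq> 0"
      then show "pdx N q \<noteq> 0 \<or> pdy N q \<noteq> 0" using L by auto
    next
      assume "pdx N q \<noteq> 0 \<or> pdy N q \<noteq> 0"
      then show "\<exists>v. frechet_derivative N (at q) v \<noteq> 0"
      proof
        assume "pdx N q \<noteq> 0" then show ?thesis using L[of 1] by (intro exI[of _ 1]) simp
      next
        assume "pdy N q \<noteq> 0" then show ?thesis using L[of "\<i>"] by (intro exI[of _ "\<i>"]) simp
      qed
    qed
    finally show ?thesis .
  qed
  show ?thesis
  proof
    assume "wave_front_near \<Omega> f N p"
    then obtain U where U: "p \<in> U" "U \<subseteq> \<Omega>" "wave_front_on U f N"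
      unfolding wave_front_near_def by blast
    then have inj: "inj (frechet_derivative (\<lambda>z. (f z, N z)) (at p))"
      unfolding wave_front_on_def by blast
    show "dim (range (frechet_derivative N (at p))) \<noteq> 0"
    proof (rule ccontr)
      assume "\<not> ?thesis"
      then have z: "pdx N p = 0" "pdy N p = 0" using rangeiff[OF assms(5)] by auto
      have "frechet_derivative (\<lambda>z. (f z, N z)) (at p) 1 = (0, 0)"
        using pairF[OF assms(5)] fx[OF assms(5)] z by (simp add: pdx_def[symmetric])
      moreover have "frechet_derivative (\<lambda>z. (f z, N z)) (at p) 0 = (0, 0)"
        using pairF[OF assms(5)] fd_decomp[OF dN[OF assms(5)]] fd_decomp[OF df[OF assms(5)]] by simp
      ultimately show False using injD[OF inj, of 1 0] by simp
    qed
  next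
    assume "dim (range (frechet_derivative N (at p))) \<noteq> 0"
    then have pz: "pdx N p \<noteq> 0 \<or> pdy N p \<noteq> 0" using rangeiff[OF assms(5)] by auto
    define U where "U = (\<Omega> \<inter> pdx N -` (-{0})) \<union> (\<Omega> \<inter> pdy N -` (-{0}))"
    have oU: "open U" unfolding U_def
      using continuous_open_preimage[OF cx assms(1), of "-{0}"] continuous_open_preimage[OF cy assms(1), of "-{0}"]
      by (intro open_Un) (auto simp: open_Compl)
    have pU: "p \<in> U" using pz assms(5) unfolding U_def by auto
    have UO: "U \<subseteq> \<Omega>" unfolding U_def by auto
    have fr: "frontal_on U f N" unfolding frontal_on_def
    proof (intro ballI conjI allI)
      fix q v assume "q \<in> U"
      then have q: "q \<in> \<Omega>" using UO by auto
      show "norm (N q) = 1" using n1 q by auto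
      show "frechet_derivative f (at q) v \<bullet> N q = 0"
        using fd_decomp[OF df[OF q]] fx[OF q] fy[OF q]
        by (simp add: inner_diff_left orthogonal_cross[unfolded orthogonal_def])
    qed
    have im: "\<forall>q\<in>U. (\<lambda>z. (f z, N z)) differentiable (at q)
             \<and> inj (frechet_derivative (\<lambda>z. (f z, N z)) (at q))"
    proof
      fix q assume "q \<in> U"
      then have q: "q \<in> \<Omega>" and nz: "pdx N q \<noteq> 0 \<or> pdy N q \<noteq> 0" using UO unfolding U_def by auto
      show "(\<lambda>z. (f z, N z)) differentiable (at q) \<and> inj (frechet_derivative (\<lambda>z. (f z, N z)) (at q))"
      proof
        show "(\<lambda>z. (f z, N z)) differentiable (at q)" using pairD[OF q] differentiable_def by blast
        have lin: "linear (frechet_derivative (\<lambda>z. (f z, N z)) (at q))"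
          unfolding pairF[OF q] using has_derivative_linear[OF pairD[OF q]] .
        show "inj (frechet_derivative (\<lambda>z. (f z, N z)) (at q))"
          unfolding linear_injective_0[OF lin]
        proof (intro allI impI)
          fix v assume "frechet_derivative (\<lambda>z. (f z, N z)) (at q) v = 0"
          then have e1: "frechet_derivative f (at q) v = 0" and e2: "frechet_derivative N (at q) v = 0"
            using pairF[OF q] by (auto simp: zero_prod_def)
          define a where "a = Re v" define b where "b = Im v"
          let ?u = "pdx N q" let ?w = "pdy N q"
          have E2: "a *\<^sub>R ?u + b *\<^sub>R ?w = 0" using e2 fd_decomp[OF dN[OF q]] a_def b_def by simp
          have "a *\<^sub>R cross3 (N q) ?w - b *\<^sub>R cross3 (N q) ?u = 0"
            using e1 fd_decomp[OF df[OF q]] fx[OF q] fy[OF q] a_def b_def by simp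
          then have "cross3 (N q) (a *\<^sub>R ?w - b *\<^sub>R ?u) = 0"
            by (simp add: Cross3.right_diff_distrib cross_mult_right)
          moreover have "N q \<bullet> (a *\<^sub>R ?w - b *\<^sub>R ?u) = 0"
            using perpx[OF q] perpy[OF q] by (simp add: inner_diff_right)
          ultimately have E1: "a *\<^sub>R ?w - b *\<^sub>R ?u = 0" using cross_perp_zero n1 q by blast
          have "(a*a + b*b) *\<^sub>R ?u = a *\<^sub>R (a *\<^sub>R ?u + b *\<^sub>R ?w) - b *\<^sub>R (a *\<^sub>R ?w - b *\<^sub>R ?u)"
            by (simp add: algebra_simps)
          then have U0: "(a*a + b*b) *\<^sub>R ?u = 0" using E1 E2 by simp
          have "(a*a + b*b) *\<^sub>R ?w = b *\<^sub>R (a *\<^sub>R ?u + b *\<^sub>R ?w) + a *\<^sub>R (a *\<^sub>R ?w - b *\<^sub>R ?u)"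
            by (simp add: algebra_simps)
          then have W0: "(a*a + b*b) *\<^sub>R ?w = 0" using E1 E2 by simp
          have "a*a + b*b = 0" using U0 W0 nz by auto
          then have "a = 0" "b = 0" by (auto simp: add_nonneg_eq_0_iff)
          then show "v = 0" using a_def b_def by (simp add: complex_eq_iff)
        qed
      qed
    qed
    show "wave_front_near \<Omega> f N p" unfolding wave_front_near_def wave_front_on_def
      using oU pU UO fr im by blast
  qed
qed

end
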